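(* Let $T$ be a positive odd integer and let $q\in\mathbb{C}$ with $|q|<1$. For $u\in\mathbb{C}$ define \[ \mathcal{M}_T(u,q) := \frac{1-e^{2 \pi i u}}{(q)_\infty}\sum_{n \in \mathbb{Z}}(-1)^{n}\frac{q^{\frac{n}{2}(Tn+1)}}{1-e^{2 \pi i u}q^n}\] (as a function of $u$ near $0$; the singularity at $u=0$ of the $n=0$ term is removable). Then for every integer $r>0$, the coefficient of $\frac{(2\pi i u)^r}{r!}$ in the Taylor expansion of $u\mapsto \mathcal{M}_T(u,q)$ at $u=0$ equals \[ M_T^r(q)=\sum_{n =0}^\infty m_T^r(n) q^n.\]
   Context: $(q)_\infty:=\prod_{k=1}^\infty(1-q^k)$. For a positive odd integer $T$, integers $m$ and $n\ge0$, the numbers $N_T(m,n)$ are defined by \[ \sum_{n=0}^\infty N_T(m,n)q^n=\frac{1}{(q)_\infty} \sum_{n=1}^\infty (-1)^{n-1}q^{\frac{n}{2}(Tn-1)+|m|n}(1-q^n),\] and for a positive integer $r$, $m^r_T(n):=\sum_{m=-n}^n m^r N_T(m,n)$. *)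

theory Defs
  imports "HOL-Complex_Analysis.Complex_Analysis" "HOL-Computational_Algebra.Formal_Power_Series"
begin

text \<open>(q)_infinity as a formal power series: its k-th coefficient equals the k-th
  coefficient of the finite product over j = 1..k of (1 - q^j).\<close>
definition qpoch_fps :: "real fps" where
  "qpoch_fps = Abs_fps (\<lambda>k. fps_nth (\<Prod>j\<in>{1..k}. 1 - fps_X ^ j) k)"

text \<open>The series sum over n >= 1 of (-1)^(n-1) q^(n(Tn-1)/2 + |m| n) (1 - q^n).
  Exponents are at least n - 1, so only n <= k+1 contribute to the coefficient of q^k.\<close>
definition NT_series :: "nat \<Rightarrow> int \<Rightarrow> real fps" where
  "NT_series T m = Abs_fps (\<lambda>k. \<Sum>n\<in>{1..k+1}. (-1) ^ (n - 1) *
      ((if k = n * (T * n - 1) div 2 + nat \<bar>m\<bar> * n then 1 else 0)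
     - (if k = n * (T * n - 1) div 2 + nat \<bar>m\<bar> * n + n then 1 else 0)))"

definition N_T :: "nat \<Rightarrow> int \<Rightarrow> nat \<Rightarrow> real" where
  "N_T T m n = fps_nth (inverse qpoch_fps * NT_series T m) n"

definition m_T :: "nat \<Rightarrow> nat \<Rightarrow> nat \<Rightarrow> real" where
  "m_T T r n = (\<Sum>m\<in>{- int n..int n}. of_int m ^ r * N_T T m n)"

definition M_T :: "nat \<Rightarrow> nat \<Rightarrow> complex \<Rightarrow> complex" where
  "M_T T r q = (\<Sum>n. complex_of_real (m_T T r n) * q ^ n)"

definition scriptM :: "nat \<Rightarrow> complex \<Rightarrow> complex \<Rightarrow> complex" where
  "scriptM T q u = (1 - exp (2 * pi * \<i> * u)) / prodinf (\<lambda>k. 1 - q ^ (k + 1)) *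
     (\<Sum>\<^sub>\<infinity>n::int. (-1) ^ nat \<bar>n\<bar> * q ^ nat (n * (int T * n + 1) div 2)
        / (1 - exp (2 * pi * \<i> * u) * q powi n))"

end

theory Submission
  imports Defs
begin

unbundle no vec_syntax


definition PP :: "complex \<Rightarrow> complex" where
  "PP z = prodinf (\<lambda>k. 1 - z ^ (k + 1))"

lemma PP_conv:
  fixes z :: complex
  assumes "norm z < 1"
  shows "convergent_prod (\<lambda>k. 1 - z ^ (k + 1))"
proof -
  have "convergent_prod (\<lambda>k. 1 + (-(z ^ (k + 1))))"
  proof (rule summable_imp_convergent_prod_complex)
    show "summable (\<lambda>k. norm (-(z ^ (k + 1))))"
      using assms by (auto simp: norm_mult norm_power intro!: summable_mult summable_geometric)
    fix k :: nat
    have "norm (z ^ (k+1)) < 1" using assms unfolding norm_power using assms by (cases "z = 0") (auto intro!: power_Suc_less_one simp del: power_Suc)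
    thus "-(z ^ (k + 1)) \<noteq> -1" by auto
  qed
  thus ?thesis by simp
qed

lemma PP_nz:
  fixes z :: complex
  assumes "norm z < 1"
  shows "PP z \<noteq> 0"
  unfolding PP_def
proof (rule prodinf_nonzero[OF PP_conv[OF assms]])
  fix k :: nat
  have "norm (z ^ (k+1)) < 1" using assms unfolding norm_power using assms by (cases "z = 0") (auto intro!: power_Suc_less_one simp del: power_Suc)
  thus "1 - z ^ (k + 1) \<noteq> 0" by auto
qed

lemma PP_unif:
  assumes "0 \<le> R" "R < 1"
  shows "uniform_limit (cball 0 R) (\<lambda>N z. \<Prod>k<N. 1 - z ^ (k + 1)) PP sequentially"
proof -
  have "uniformly_convergent_on (cball 0 R) (\<lambda>N (z::complex). \<Prod>k<N. 1 - z ^ (k + 1))"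
  proof (rule uniformly_convergent_on_prod'[where f = "\<lambda>k z. 1 - z^(k+1)"])
    show "uniformly_convergent_on (cball 0 R) (\<lambda>N (z::complex). \<Sum>n<N. norm (1 - z ^ (n + 1) - 1))"
    proof (rule Weierstrass_m_test'_ev)
      show "\<forall>\<^sub>F n in sequentially. \<forall>x::complex\<in>cball 0 R. norm (norm (1 - x ^ (n + 1) - 1)) \<le> R ^ (n+1)"
      proof (intro always_eventually allI ballI)
        fix n and x :: complex assume "x \<in> cball 0 R"
        hence "norm x \<le> R" by simp
        hence "norm x ^ (n+1) \<le> R ^ (n+1)" by (intro power_mono) auto
        thus "norm (norm (1 - x ^ (n + 1) - 1)) \<le> R ^ (n+1)" by (simp add: norm_power norm_mult)
      qed
      show "summable (\<lambda>n. R ^ (n+1))" using assms by simp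
    qed
  qed (auto intro!: continuous_intros)
  then obtain g where g: "uniform_limit (cball 0 R) (\<lambda>N (z::complex). \<Prod>k<N. 1 - z ^ (k + 1)) g sequentially"
    by (auto simp: uniformly_convergent_on_def)
  also have "?this \<longleftrightarrow> uniform_limit (cball 0 R) (\<lambda>N z. \<Prod>k<N. 1 - z ^ (k + 1)) PP sequentially"
  proof (intro uniform_limit_cong)
    fix z :: complex assume z: "z \<in> cball 0 R"
    have "(\<lambda>n. \<Prod>k<n. 1 - z ^ (k + 1)) \<longlonglongrightarrow> g z"
      by (rule tendsto_uniform_limitI[OF g z])
    hence "(\<lambda>n. \<Prod>k<Suc n. 1 - z ^ (k + 1)) \<longlonglongrightarrow> g z"
      by (rule LIMSEQ_Suc)
    moreover have "norm z < 1" using z assms by auto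
    hence "(\<lambda>n. \<Prod>k<Suc n. 1 - z ^ (k + 1)) \<longlonglongrightarrow> PP z"
      using convergent_prod_LIMSEQ[OF PP_conv] unfolding lessThan_Suc_atMost PP_def by blast
    ultimately show "g z = PP z"
      using tendsto_unique by force
  qed auto
  finally show ?thesis .
qed

lemma PP_holo: "PP holomorphic_on ball 0 1"
proof (rule holomorphic_uniform_sequence)
  fix x :: complex assume x: "x \<in> ball 0 1"
  define R where "R = (1 + norm x) / 2"
  have R: "0 \<le> R" "R < 1" "norm x < R" using x by (auto simp: R_def)
  have "uniform_limit (cball x ((1 - norm x)/2)) (\<lambda>N z. \<Prod>k<N. 1 - z ^ (k + 1)) PP sequentially"
    by (rule uniform_limit_on_subset[OF PP_unif[OF R(1,2)]])
       (auto simp: R_def cball_subset_cball_iff field_simps)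
  moreover have "cball x ((1 - norm x)/2) \<subseteq> ball 0 1"
  proof
    fix y assume "y \<in> cball x ((1 - norm x)/2)"
    hence "norm (x - y) \<le> (1 - norm x)/2" by (simp add: dist_norm)
    moreover have "norm y \<le> norm x + norm (x - y)" using norm_triangle_sub[of y x] norm_minus_commute[of x y] by simp
    ultimately show "y \<in> ball 0 1" using x by auto
  qed
  ultimately show "\<exists>d>0. cball x d \<subseteq> ball 0 1 \<and> uniform_limit (cball x d) (\<lambda>N z. \<Prod>k<N. 1 - z ^ (k + 1)) PP sequentially"
    using x by (intro exI[of _ "(1 - norm x)/2"]) auto
qed (auto intro!: holomorphic_intros)


definition cfps :: "real fps \<Rightarrow> complex fps" where
  "cfps F = Abs_fps (\<lambda>n. complex_of_real (F $ n))"

lemma cfps_nth [simp]: "cfps F $ n = complex_of_real (F $ n)"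
  by (simp add: cfps_def)

lemma cfps_mult: "cfps (F * G) = cfps F * cfps G"
  by (rule fps_ext) (simp add: fps_mult_nth)

lemma cfps_1 [simp]: "cfps 1 = 1"
  by (rule fps_ext) (simp add: fps_one_nth)

lemma cfps_diff: "cfps (F - G) = cfps F - cfps G"
  by (rule fps_ext) simp

lemma cfps_X_power: "cfps (fps_X ^ m) = fps_X ^ m"
  by (rule fps_ext) simp

lemma cfps_prod: "cfps (\<Prod>k\<in>A. f k) = (\<Prod>k\<in>A. cfps (f k))"
  by (induction A rule: infinite_finite_induct) (auto simp: cfps_mult)

lemma cfps_inverse:
  assumes "F $ 0 \<noteq> 0"
  shows "cfps (inverse F) = inverse (cfps F)"
proof -
  have "cfps F * cfps (inverse F) = 1"
    using inverse_mult_eq_1'[OF assms] by (metis cfps_mult cfps_1)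
  thus ?thesis by (intro fps_inverse_unique[symmetric])
qed

lemma mult_one_minus_X_power_nth:
  fixes F :: "'a :: comm_ring_1 fps"
  assumes "n < m"
  shows "(F * (1 - fps_X ^ m)) $ n = F $ n"
  using assms by (simp add: algebra_simps fps_X_power_mult_right_nth)

lemma prod_stable_nth:
  fixes n :: nat
  shows "N \<ge> n \<Longrightarrow> (\<Prod>k<N. (1 - fps_X ^ (k + 1) :: 'a :: comm_ring_1 fps)) $ n
          = (\<Prod>k<n. (1 - fps_X ^ (k + 1) :: 'a fps)) $ n"
proof (induction N)
  case 0 thus ?case by simp
next
  case (Suc N)
  show ?case
  proof (cases "n = Suc N")
    case True thus ?thesis by simp
  next
    case False
    hence "N \<ge> n" using Suc.prems by simp
    have "(\<Prod>k<Suc N. (1 - fps_X ^ (k + 1) :: 'a fps)) $ n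
        = ((\<Prod>k<N. (1 - fps_X ^ (k + 1) :: 'a fps)) * (1 - fps_X ^ (N + 1))) $ n"
      by simp
    also have "\<dots> = (\<Prod>k<N. (1 - fps_X ^ (k + 1) :: 'a fps)) $ n"
      using \<open>N \<ge> n\<close> by (intro mult_one_minus_X_power_nth) auto
    finally show ?thesis using Suc.IH[OF \<open>N \<ge> n\<close>] by simp
  qed
qed

definition cQ :: "complex fps" where "cQ = cfps qpoch_fps"

lemma qpoch_nth: "qpoch_fps $ n = (\<Prod>k<n. (1 - fps_X ^ (k + 1) :: real fps)) $ n"
proof -
  have "(\<Prod>j\<in>{1..n}. (1 - fps_X ^ j :: real fps)) = (\<Prod>k<n. 1 - fps_X ^ (k + 1))"
    by (simp add: prod.atLeast1_atMost_eq)
  thus ?thesis by (simp add: qpoch_fps_def)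
qed

lemma qpoch_nth0: "qpoch_fps $ 0 = 1"
  by (simp add: qpoch_fps_def)

lemma PP_fps: "PP has_fps_expansion cQ"
proof -
  have holo: "PP holomorphic_on ball 0 1" by (rule PP_holo)
  have exp: "PP has_fps_expansion fps_expansion PP 0"
    using holo by (intro has_fps_expansion_fps_expansion) auto
  have "fps_expansion PP 0 = cQ"
  proof (rule uniform_limit_imp_fps_expansion_eq[where f = "\<lambda>N. \<Prod>k<N. (1 - fps_X ^ (k + 1) :: complex fps)"
          and f' = "\<lambda>N z. \<Prod>k<N. 1 - z ^ (k + 1)" and F = sequentially and A = "ball 0 (1/2)"])
    show "(\<lambda>N. \<Prod>k<N. (1 - fps_X ^ (k + 1) :: complex fps)) \<longlonglongrightarrow> cQ"
    proof (rule tendsto_fpsI)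
      fix n :: nat
      show "\<forall>\<^sub>F N in sequentially. (\<Prod>k<N. (1 - fps_X ^ (k + 1) :: complex fps)) $ n = cQ $ n"
        using eventually_ge_at_top[of n]
      proof eventually_elim
        case (elim N)
        have "(\<Prod>k<N. (1 - fps_X ^ (k + 1) :: complex fps)) $ n = (\<Prod>k<n. (1 - fps_X ^ (k + 1) :: complex fps)) $ n"
          using elim by (rule prod_stable_nth)
        also have "(\<Prod>k<n. (1 - fps_X ^ (k + 1) :: complex fps)) = cfps (\<Prod>k<n. (1 - fps_X ^ (k + 1)))"
          unfolding cfps_prod cfps_diff cfps_X_power cfps_1 by (rule refl)
        finally show ?case by (simp add: cQ_def qpoch_nth)
      qed
    qed
    show "uniform_limit (ball 0 (1/2)) (\<lambda>N z. \<Prod>k<N. 1 - z ^ (k + 1)) PP sequentially"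
      by (rule uniform_limit_on_subset[OF PP_unif[of "1/2"]]) auto
    show "\<forall>\<^sub>F N in sequentially. (\<lambda>z. \<Prod>k<N. 1 - z ^ (k + 1)) has_fps_expansion (\<Prod>k<N. (1 - fps_X ^ (k + 1) :: complex fps))"
      by (intro always_eventually allI has_fps_expansion_prod has_fps_expansion_diff has_fps_expansion_1 has_fps_expansion_fps_X_power)
    show "PP has_fps_expansion fps_expansion PP 0" by (rule exp)
    show "\<forall>\<^sub>F N in sequentially. (\<lambda>z. \<Prod>k<N. 1 - z ^ (k + 1)) holomorphic_on ball 0 (1/2)"
      by (intro always_eventually allI holomorphic_intros)
  qed simp_all
  with exp show ?thesis by (simp only:)
qed

lemma inv_PP_fps: "(\<lambda>z. inverse (PP z)) has_fps_expansion cfps (inverse qpoch_fps)"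
proof -
  have "(\<lambda>z. inverse (PP z)) has_fps_expansion inverse cQ"
    by (rule has_fps_expansion_inverse[OF PP_fps]) (simp add: cQ_def qpoch_nth0)
  thus ?thesis by (simp add: cQ_def cfps_inverse qpoch_nth0)
qed

lemma inv_PP_holo: "(\<lambda>z. inverse (PP z)) holomorphic_on ball 0 1"
  by (rule holomorphic_on_inverse[OF PP_holo]) (use PP_nz in auto)


definition sN :: "nat \<Rightarrow> int \<Rightarrow> nat \<Rightarrow> real" where
  "sN T m k = fps_nth (NT_series T m) k"

lemma sN_expand: "sN T m k = (\<Sum>n\<in>{1..k+1}. (-1) ^ (n - 1) *
      ((if k = n * (T * n - 1) div 2 + nat \<bar>m\<bar> * n then 1 else 0)
     - (if k = n * (T * n - 1) div 2 + nat \<bar>m\<bar> * n + n then 1 else 0)))"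
  by (simp add: sN_def NT_series_def)

lemma sN_zero:
  assumes "nat \<bar>m\<bar> > k"
  shows "sN T m k = 0"
  unfolding sN_expand
proof (rule sum.neutral, rule ballI)
  fix n assume n: "n \<in> {1..k+1}"
  have "nat \<bar>m\<bar> * n \<ge> nat \<bar>m\<bar>" using n by simp
  hence "k < n * (T * n - 1) div 2 + nat \<bar>m\<bar> * n" using assms by linarith
  thus "(-1) ^ (n - 1) *
      ((if k = n * (T * n - 1) div 2 + nat \<bar>m\<bar> * n then 1 else 0)
     - (if k = n * (T * n - 1) div 2 + nat \<bar>m\<bar> * n + n then 1 else 0)) = (0::real)"
    by simp
qed

lemma sN_bound: "\<bar>sN T m k\<bar> \<le> real k + 1"
proof -
  have "\<bar>sN T m k\<bar> \<le> (\<Sum>n\<in>{1..k+1}. \<bar>(-1) ^ (n - 1) *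
      ((if k = n * (T * n - 1) div 2 + nat \<bar>m\<bar> * n then 1 else 0)
     - (if k = n * (T * n - 1) div 2 + nat \<bar>m\<bar> * n + n then 1 else (0::real)))\<bar>)"
    unfolding sN_expand by (rule sum_abs)
  also have "\<dots> \<le> (\<Sum>n\<in>{1..k+1}. 1)"
    by (intro sum_mono) (auto simp: abs_mult)
  also have "\<dots> = real k + 1" by simp
  finally show ?thesis .
qed

lemma sN_abs: "sN T (- m) k = sN T m k"
  by (simp add: sN_expand)

definition gg :: "nat \<Rightarrow> nat \<Rightarrow> nat \<Rightarrow> real" where
  "gg T r k = (\<Sum>m\<in>{- int k..int k}. of_int m ^ r * sN T m k)"

definition Gfps :: "nat \<Rightarrow> nat \<Rightarrow> real fps" where
  "Gfps T r = Abs_fps (gg T r)"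

lemma m_T_eq: "m_T T r n = fps_nth (inverse qpoch_fps * Gfps T r) n"
proof -
  have "m_T T r n = (\<Sum>m\<in>{- int n..int n}. of_int m ^ r *
          (\<Sum>i=0..n. fps_nth (inverse qpoch_fps) i * sN T m (n - i)))"
    by (simp add: m_T_def N_T_def fps_mult_nth sN_def)
  also have "\<dots> = (\<Sum>i=0..n. fps_nth (inverse qpoch_fps) i *
          (\<Sum>m\<in>{- int n..int n}. of_int m ^ r * sN T m (n - i)))"
    by (simp add: sum_distrib_left sum_distrib_right sum.swap[of _ "{0..n}"] mult_ac)
  also have "\<dots> = (\<Sum>i=0..n. fps_nth (inverse qpoch_fps) i * gg T r (n - i))"
  proof (intro sum.cong refl arg_cong2[where f = "(*)"])
    fix i assume i: "i \<in> {0..n}"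
    have "(\<Sum>m\<in>{- int n..int n}. of_int m ^ r * sN T m (n - i))
        = (\<Sum>m\<in>{- int (n - i)..int (n - i)}. of_int m ^ r * sN T m (n - i))"
    proof (rule sum.mono_neutral_right)
      show "finite {- int n..int n}" by simp
      show "{- int (n - i)..int (n - i)} \<subseteq> {- int n..int n}" using i by auto
      show "\<forall>m\<in>{- int n..int n} - {- int (n - i)..int (n - i)}. of_int m ^ r * sN T m (n - i) = 0"
      proof
        fix m assume "m \<in> {- int n..int n} - {- int (n - i)..int (n - i)}"
        hence "nat \<bar>m\<bar> > n - i" by auto
        thus "of_int m ^ r * sN T m (n - i) = 0" by (simp add: sN_zero)
      qed
    qed
    thus "(\<Sum>m\<in>{- int n..int n}. of_int m ^ r * sN T m (n - i)) = gg T r (n - i)"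
      by (simp add: gg_def)
  qed
  also have "\<dots> = fps_nth (inverse qpoch_fps * Gfps T r) n"
    by (simp add: fps_mult_nth Gfps_def)
  finally show ?thesis .
qed

lemma sum_sym_int:
  "(\<Sum>m\<in>{- int k..int k}. f m) = f 0 + (\<Sum>j\<in>{1..k}. f (int j) + f (- int j))"
proof (induction k)
  case 0 thus ?case by simp
next
  case (Suc k)
  have eq: "{- int (Suc k)..int (Suc k)} = insert (int (Suc k)) (insert (- int (Suc k)) {- int k..int k})"
    by auto
  show ?case unfolding eq
    by (subst sum.insert; simp)+ (simp add: Suc.IH add_ac)
qed

lemma gg_nat:
  assumes "r > 0"
  shows "gg T r k = (\<Sum>j\<in>{1..k}. (real j ^ r + (- real j) ^ r) * sN T (int j) k)"
  unfolding gg_def sum_sym_int using assms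
  by (simp add: sN_abs[of T "int _"] algebra_simps)

lemma gg_bound:
  assumes "r > 0"
  shows "\<bar>gg T r k\<bar> \<le> 2 * (real k + 1) ^ (r + 2)"
proof -
  have "\<bar>gg T r k\<bar> \<le> (\<Sum>j\<in>{1..k}. \<bar>(real j ^ r + (- real j) ^ r) * sN T (int j) k\<bar>)"
    unfolding gg_nat[OF assms] by (rule sum_abs)
  also have "\<dots> \<le> (\<Sum>j\<in>{1..k}. 2 * (real k + 1) ^ r * (real k + 1))"
  proof (intro sum_mono)
    fix j assume j: "j \<in> {1..k}"
    have "\<bar>real j ^ r + (- real j) ^ r\<bar> \<le> real j ^ r + real j ^ r"
      by (rule order_trans[OF abs_triangle_ineq]) (simp add: power_abs)
    also have "\<dots> \<le> 2 * (real k + 1) ^ r"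
      using j by (simp add: power_mono)
    finally have 1: "\<bar>real j ^ r + (- real j) ^ r\<bar> \<le> 2 * (real k + 1) ^ r" .
    show "\<bar>(real j ^ r + (- real j) ^ r) * sN T (int j) k\<bar> \<le> 2 * (real k + 1) ^ r * (real k + 1)"
      unfolding abs_mult by (intro mult_mono 1 sN_bound) auto
  qed
  also have "\<dots> = real k * (2 * (real k + 1) ^ r * (real k + 1))" by simp
  also have "\<dots> \<le> (real k + 1) * (2 * (real k + 1) ^ r * (real k + 1))"
    by (intro mult_right_mono) auto
  also have "\<dots> = 2 * (real k + 1) ^ (r + 2)" by (simp add: power_add power2_eq_square)
  finally show ?thesis .
qed

lemma polygeom:
  fixes \<rho> :: real
  assumes "0 \<le> \<rho>" "\<rho> < 1"
  shows "summable (\<lambda>k. (real k + 1) ^ d * \<rho> ^ k)"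
proof -
  have "conv_radius (\<lambda>k. (real k + 1) ^ d) = ereal 1"
  proof (rule conv_radius_ratio_limit_nonzero)
    have "(\<lambda>n. of_nat (Suc n) / of_nat (Suc (Suc n)) :: real) \<longlonglongrightarrow> 1"
      using LIMSEQ_Suc[OF LIMSEQ_n_over_Suc_n] .
    hence "(\<lambda>n. (of_nat (Suc n) / of_nat (Suc (Suc n))) ^ d :: real) \<longlonglongrightarrow> 1 ^ d"
      by (rule tendsto_power)
    thus "(\<lambda>n. norm ((real n + 1) ^ d) / norm ((real (Suc n) + 1) ^ d)) \<longlonglongrightarrow> 1"
      by (simp add: power_divide add_ac)
  qed auto
  hence "summable (\<lambda>k. (real k + 1) ^ d * \<rho> ^ k)"
    using assms by (intro summable_in_conv_radius) auto
  thus ?thesis .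
qed

lemma G_radius:
  assumes "r > 0" "0 \<le> \<rho>" "\<rho> < 1"
  shows "fps_conv_radius (cfps (Gfps T r)) \<ge> ereal \<rho>"
proof -
  have "summable (\<lambda>n. fps_nth (cfps (Gfps T r)) n * complex_of_real \<rho> ^ n)"
  proof (rule summable_norm_cancel, rule summable_comparison_test')
    show "summable (\<lambda>k. 2 * ((real k + 1) ^ (r+2) * \<rho> ^ k))"
      by (intro summable_mult polygeom assms)
    fix n :: nat
    have "norm (fps_nth (cfps (Gfps T r)) n * complex_of_real \<rho> ^ n) = \<bar>gg T r n\<bar> * \<rho> ^ n"
      using assms by (simp add: Gfps_def norm_mult norm_power)
    also have "\<dots> \<le> 2 * (real n + 1) ^ (r + 2) * \<rho> ^ n"
      using assms by (intro mult_right_mono gg_bound) auto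
    finally show "norm (norm (fps_nth (cfps (Gfps T r)) n * complex_of_real \<rho> ^ n))
                  \<le> 2 * ((real n + 1) ^ (r+2) * \<rho> ^ n)" by simp
  qed
  hence "conv_radius (fps_nth (cfps (Gfps T r))) \<ge> norm (complex_of_real \<rho>)"
    by (rule conv_radius_geI)
  thus ?thesis using assms by (simp add: fps_conv_radius_def)
qed


definition EE :: "nat \<Rightarrow> nat \<Rightarrow> nat \<Rightarrow> nat" where
  "EE T a j = (a+1)*(T*(a+1)-1) div 2 + j*(a+1)"

definition kap :: "nat \<Rightarrow> nat \<times> nat \<times> bool \<Rightarrow> nat" where
  "kap T i = (case i of (j, a, b) \<Rightarrow> EE T a (j+1) + (if b then 0 else a+1))"

definition cr :: "nat \<Rightarrow> nat \<Rightarrow> real" where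
  "cr r j = real j ^ r + (- real j) ^ r"

definition wr :: "nat \<Rightarrow> nat \<times> nat \<times> bool \<Rightarrow> real" where
  "wr r i = (case i of (j, a, b) \<Rightarrow> cr r (j+1) * (-1) ^ a * (if b then 1 else -1))"

lemma e2_ge:
  fixes T a :: nat
  assumes "T > 0"
  shows "a \<le> (a+1)*(T*(a+1)-1) div 2"
proof -
  from assms have "1 \<le> T" by simp
  hence "(a+1) * 1 \<le> (a+1) * T" by (rule mult_le_mono2)
  hence "T*(a+1) \<ge> a+1" by (simp add: mult.commute)
  hence "T*(a+1) - 1 \<ge> a" by linarith
  hence "(a+1)*(T*(a+1)-1) \<ge> (a+1)*a" by (intro mult_left_mono) auto
  moreover have "(a+1)*a \<ge> 2*a" by (cases a) auto
  ultimately show ?thesis by linarith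
qed

lemma EE_ge:
  fixes T a j :: nat
  assumes "T > 0"
  shows "a + j \<le> EE T a j"
proof -
  have "j \<le> j*(a+1)" by simp
  thus ?thesis using e2_ge[OF assms, of a] unfolding EE_def by linarith
qed

lemma sN_nat:
  "sN T (int j) k = (\<Sum>a\<le>k. (-1) ^ a * ((if k = EE T a j then 1 else 0) - (if k = EE T a j + a + 1 then 1 else 0)))"
proof -
  have "sN T (int j) k = (\<Sum>a<k+1. (-1) ^ a *
      ((if k = Suc a * (T * Suc a - 1) div 2 + j * Suc a then 1 else 0)
     - (if k = Suc a * (T * Suc a - 1) div 2 + j * Suc a + Suc a then 1 else 0)))"
    unfolding sN_expand by (simp only: One_nat_def sum.atLeast1_atMost_eq) simp
  also have "\<dots> = (\<Sum>a\<le>k. (-1) ^ a * ((if k = EE T a j then 1 else 0) - (if k = EE T a j + a + 1 then 1 else 0)))"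
    by (intro sum.cong) (auto simp: EE_def lessThan_Suc_atMost)
  finally show ?thesis .
qed

lemma gg_fiber:
  assumes "r > 0" "T > 0"
  shows "gg T r k = (\<Sum>i\<in>{i. kap T i = k}. wr r i)"
proof -
  define B where "B = {..<k} \<times> {..k} \<times> (UNIV :: bool set)"
  have finB: "finite B" by (simp add: B_def)
  have inB: "i \<in> B" if h: "kap T i = k" for i
  proof -
    obtain j a b where i: "i = (j, a, b)" by (cases i) auto
    have "a + (j+1) \<le> EE T a (j+1)" by (rule EE_ge[OF assms(2)])
    with h show ?thesis by (auto simp: B_def kap_def i split: if_splits)
  qed
  have fib: "{i. kap T i = k} = {i\<in>B. kap T i = k}"
    using inB by blast
  have "(\<Sum>i\<in>{i. kap T i = k}. wr r i) = (\<Sum>i\<in>B. if kap T i = k then wr r i else 0)"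
    unfolding fib by (rule sum.inter_filter[OF finB])
  also have "\<dots> = (\<Sum>j<k. \<Sum>a\<le>k. \<Sum>b\<in>(UNIV::bool set). if kap T (j,a,b) = k then wr r (j,a,b) else 0)"
    unfolding B_def by (simp add: sum.cartesian_product)
  also have "\<dots> = (\<Sum>j<k. \<Sum>a\<le>k. cr r (j+1) * ((-1) ^ a *
       ((if k = EE T a (j+1) then 1 else 0) - (if k = EE T a (j+1) + a + 1 then 1 else 0))))"
    by (intro sum.cong refl) (auto simp: UNIV_bool kap_def wr_def)
  also have "\<dots> = (\<Sum>j<k. cr r (j+1) * sN T (int (j+1)) k)"
    unfolding sN_nat sum_distrib_left by (rule refl)
  also have "\<dots> = gg T r k"
    unfolding gg_nat[OF assms(1)] cr_def by (simp only: One_nat_def sum.atLeast1_atMost_eq) simp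
  finally show ?thesis ..
qed

lemma prod_summable_nonneg:
  fixes f :: "'a \<Rightarrow> real" and g :: "'b \<Rightarrow> real"
  assumes "f summable_on A" "g summable_on B" "\<And>x. f x \<ge> 0" "\<And>y. g y \<ge> 0"
  shows "(\<lambda>(x,y). f x * g y) summable_on (A \<times> B)"
proof (rule summable_on_SigmaI[where g = "\<lambda>x. f x * infsum g B"])
  fix x assume "x \<in> A"
  show "((\<lambda>y. case (x, y) of (x, y) \<Rightarrow> f x * g y) has_sum f x * infsum g B) B"
    using has_sum_cmult_right[OF has_sum_infsum[OF assms(2)], of "f x"] by simp
next
  show "(\<lambda>x. f x * infsum g B) summable_on A"
    by (rule summable_on_cmult_left[OF assms(1)])
qed (use assms in auto)

lemma nat_summable_on:
  fixes f :: "nat \<Rightarrow> real"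
  assumes "summable f" "\<And>n. f n \<ge> 0"
  shows "f summable_on UNIV"
  using assms summable_on_UNIV_nonneg_real_iff by blast


context
  fixes T :: nat and q :: complex
  assumes T: "T > 0" and q: "norm q < 1"
begin

definition hh :: "nat \<Rightarrow> nat \<Rightarrow> complex" where
  "hh a j = (-1) ^ a * (q ^ (EE T a j) - q ^ (EE T a j + a + 1))"

definition HH :: "nat \<Rightarrow> complex" where
  "HH b = suminf (\<lambda>a. hh a (b+1))"

lemma norm_q_pow_le: "m \<le> n \<Longrightarrow> norm (q ^ n) \<le> norm q ^ m"
  unfolding norm_power using q by (intro power_decreasing) auto

lemma norm_hh: "norm (hh a j) \<le> 2 * norm q ^ a * norm q ^ j"
proof -
  have "norm (hh a j) = norm (q ^ (EE T a j) - q ^ (EE T a j + a + 1))"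
    unfolding hh_def norm_mult by (simp add: norm_power)
  also have "\<dots> \<le> norm (q ^ (EE T a j)) + norm (q ^ (EE T a j + a + 1))"
    by (rule norm_triangle_ineq4)
  also have "\<dots> \<le> norm q ^ (a + j) + norm q ^ (a + j)"
  proof (rule add_mono)
    show "norm (q ^ (EE T a j)) \<le> norm q^(a+j)" using EE_ge[OF T, of a j] by (rule norm_q_pow_le)
    show "norm (q ^ (EE T a j + a + 1)) \<le> norm q^(a+j)"
      by (rule norm_q_pow_le) (use EE_ge[OF T, of a j] in linarith)
  qed
  finally show ?thesis by (simp add: power_add)
qed

lemma hh_summable: "summable (\<lambda>a. norm (hh a j))"
proof (rule summable_comparison_test')
  show "summable (\<lambda>a. 2 * norm q ^ j * norm q ^ a)"
    using q by (intro summable_mult summable_geometric) auto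
  show "norm (norm (hh a j)) \<le> 2 * norm q ^ j * norm q ^ a" for a
    using norm_hh[of a j] by (simp add: mult_ac)
qed

lemma HH_sums: "(\<lambda>a. hh a (b+1)) sums HH b"
  unfolding HH_def by (rule summable_sums[OF summable_norm_cancel[OF hh_summable]])

lemma HH_bound: "norm (HH b) \<le> 2 * norm q ^ (b+1) / (1 - norm q)"
proof -
  have "norm (HH b) \<le> (\<Sum>a. norm (hh a (b+1)))"
    unfolding HH_def by (rule summable_norm[OF hh_summable])
  also have "\<dots> \<le> (\<Sum>a. 2 * norm q ^ (b+1) * norm q ^ a)"
    using q by (intro suminf_le hh_summable summable_mult summable_geometric)
               (auto simp: mult_ac intro: order_trans[OF norm_hh])
  also have "\<dots> = 2 * norm q ^ (b+1) * (1 / (1 - norm q))"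
    using q by (subst suminf_mult) (auto simp: suminf_geometric)
  finally show ?thesis by simp
qed

definition yy :: "nat \<Rightarrow> nat \<times> nat \<times> bool \<Rightarrow> complex" where
  "yy r i = complex_of_real (wr r i) * q ^ (kap T i)"

definition bnd :: "nat \<Rightarrow> nat \<times> nat \<times> bool \<Rightarrow> real" where
  "bnd r = (\<lambda>(j, ab). (2 * (real j + 1) ^ r * norm q ^ (j+1)) * (case ab of (a, b) \<Rightarrow> norm q ^ a * 1))"

lemma cr_bound: "\<bar>cr r j\<bar> \<le> 2 * real j ^ r"
  unfolding cr_def by (rule order_trans[OF abs_triangle_ineq]) (simp add: power_abs)

lemma yy_bound: "norm (yy r i) \<le> bnd r i"
proof -
  obtain j a b where i: "i = (j, a, b)" by (cases i) auto
  have w: "norm (complex_of_real (wr r i)) = \<bar>cr r (j+1)\<bar>"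
    by (auto simp: wr_def i norm_mult norm_power)
  have "norm (yy r i) = norm (complex_of_real (wr r i)) * norm (q ^ kap T i)"
    unfolding yy_def by (rule norm_mult)
  also have "\<dots> = \<bar>cr r (j+1)\<bar> * norm (q ^ kap T i)" by (simp only: w)
  also have "\<dots> \<le> (2 * (real j + 1) ^ r) * norm q ^ (a + (j+1))"
  proof (rule mult_mono)
    show "\<bar>cr r (j+1)\<bar> \<le> 2 * (real j + 1) ^ r"
      using cr_bound[of r "j+1"] by (simp add: add.commute)
    have "a + (j+1) \<le> EE T a (j+1)" by (rule EE_ge[OF T])
    also have "EE T a (j+1) \<le> kap T i" by (simp add: kap_def i)
    finally show "norm (q ^ kap T i) \<le> norm q ^ (a + (j+1))" by (rule norm_q_pow_le)
  qed auto
  also have "\<dots> = bnd r i" by (simp add: bnd_def i power_add mult_ac)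
  finally show ?thesis .
qed

lemma bnd_summable: "bnd r summable_on UNIV"
proof -
  have f1: "(\<lambda>j. 2 * (real j + 1) ^ r * norm q ^ (j+1)) summable_on UNIV"
  proof (rule nat_summable_on)
    have "summable (\<lambda>j. (2 * norm q) * ((real j + 1) ^ r * norm q ^ j))"
      using q by (intro summable_mult polygeom) auto
    thus "summable (\<lambda>j. 2 * (real j + 1) ^ r * norm q ^ (j+1))"
      by (simp add: mult_ac)
  qed auto
  have g0: "(\<lambda>a. norm q ^ a) summable_on UNIV"
    using q by (intro nat_summable_on summable_geometric) auto
  have b0: "(\<lambda>b::bool. 1::real) summable_on UNIV" by simp
  have g1: "(\<lambda>(a, b::bool). norm q ^ a * 1) summable_on (UNIV \<times> UNIV)"
    using prod_summable_nonneg[OF g0 b0] by simp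
  have "(\<lambda>(j, ab). (2 * (real j + 1) ^ r * norm q ^ (j+1)) * (case ab of (a, b::bool) \<Rightarrow> norm q ^ a * 1))
          summable_on (UNIV \<times> (UNIV \<times> UNIV))"
    using prod_summable_nonneg[OF f1 g1] by (simp add: case_prod_unfold)
  thus ?thesis by (simp add: bnd_def)
qed

lemma yy_summable: "yy r summable_on A"
proof -
  have "(\<lambda>x. norm (yy r x)) summable_on UNIV"
  proof (rule Infinite_Sum.abs_summable_on_comparison_test)
    show "(\<lambda>x. norm (bnd r x)) summable_on UNIV"
      using bnd_summable by (simp add: bnd_def case_prod_unfold)
    show "norm (yy r i) \<le> norm (bnd r i)" for i
      using yy_bound[of r i] by simp
  qed
  hence "yy r summable_on UNIV" by (rule abs_summable_summable)
  thus ?thesis by (rule summable_on_subset_banach) auto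
qed

lemma fiber_finite: "finite {i. kap T i = k}"
proof (rule finite_subset)
  show "{i. kap T i = k} \<subseteq> {..<k} \<times> {..k} \<times> (UNIV :: bool set)"
  proof
    fix i assume h: "i \<in> {i. kap T i = k}"
    obtain j a b where i: "i = (j, a, b)" by (cases i) auto
    have "a + (j+1) \<le> EE T a (j+1)" by (rule EE_ge[OF T])
    with h show "i \<in> {..<k} \<times> {..k} \<times> (UNIV :: bool set)"
      by (auto simp: kap_def i split: if_splits)
  qed
qed auto

lemma G_hassum1:
  assumes "r > 0"
  shows "((\<lambda>k. complex_of_real (gg T r k) * q ^ k) has_sum infsum (yy r) UNIV) UNIV"
proof -
  have bij: "bij_betw (\<lambda>i. (kap T i, i)) UNIV (Sigma UNIV (\<lambda>k. {i. kap T i = k}))"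
    by (rule bij_betwI[where g = snd]) auto
  have "(yy r has_sum infsum (yy r) UNIV) UNIV"
    using yy_summable by (rule has_sum_infsum)
  hence "((\<lambda>(k, i). yy r i) has_sum infsum (yy r) UNIV) (Sigma UNIV (\<lambda>k. {i. kap T i = k}))"
    using has_sum_reindex_bij_betw[OF bij, of "\<lambda>(k, i). yy r i"] by simp
  hence "((\<lambda>k. \<Sum>i\<in>{i. kap T i = k}. yy r i) has_sum infsum (yy r) UNIV) UNIV"
    by (rule has_sum_Sigma') (auto intro: has_sum_finiteI fiber_finite)
  also have "(\<lambda>k. \<Sum>i\<in>{i. kap T i = k}. yy r i) = (\<lambda>k. complex_of_real (gg T r k) * q ^ k)"
  proof
    fix k
    have "(\<Sum>i\<in>{i. kap T i = k}. yy r i) = (\<Sum>i\<in>{i. kap T i = k}. complex_of_real (wr r i) * q ^ k)"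
      by (intro sum.cong) (auto simp: yy_def)
    also have "\<dots> = complex_of_real (\<Sum>i\<in>{i. kap T i = k}. wr r i) * q ^ k"
      by (simp add: sum_distrib_right)
    also have "\<dots> = complex_of_real (gg T r k) * q ^ k"
      by (simp add: gg_fiber[OF assms T])
    finally show "(\<Sum>i\<in>{i. kap T i = k}. yy r i) = complex_of_real (gg T r k) * q ^ k" .
  qed
  finally show ?thesis .
qed

lemma yy_inner:
  "((\<lambda>ab. yy r (j, ab)) has_sum complex_of_real (cr r (j+1)) * HH j) UNIV"
proof -
  have sm: "(\<lambda>ab. yy r (j, ab)) summable_on UNIV"
  proof -
    have "(\<lambda>(x, y). yy r (x, y)) summable_on Sigma UNIV (\<lambda>_. UNIV)"
      using yy_summable[of r UNIV] by simp
    from summable_on_SigmaD1[OF this] show ?thesis by simp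
  qed
  have "((\<lambda>ab. yy r (j, ab)) has_sum infsum (\<lambda>ab. yy r (j, ab)) UNIV) (Sigma UNIV (\<lambda>_. UNIV))"
    using has_sum_infsum[OF sm] by simp
  hence 1: "((\<lambda>a. \<Sum>b\<in>UNIV. yy r (j, a, b)) has_sum infsum (\<lambda>ab. yy r (j, ab)) UNIV) UNIV"
    by (rule has_sum_Sigma'[where f = "\<lambda>ab. yy r (j, ab)"]) (auto intro: has_sum_finiteI)
  have eq: "(\<Sum>b\<in>UNIV. yy r (j, a, b)) = complex_of_real (cr r (j+1)) * hh a (j+1)" for a
    by (simp add: UNIV_bool yy_def wr_def kap_def hh_def algebra_simps)
  have 2: "((\<lambda>a. complex_of_real (cr r (j+1)) * hh a (j+1)) has_sum complex_of_real (cr r (j+1)) * HH j) UNIV"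
    by (intro has_sum_cmult_right norm_summable_imp_has_sum hh_summable HH_sums)
  from 1 2 have "infsum (\<lambda>ab. yy r (j, ab)) UNIV = complex_of_real (cr r (j+1)) * HH j"
    unfolding eq using has_sum_unique by blast
  with has_sum_infsum[OF sm] show ?thesis by simp
qed

lemma G_hassum2:
  "((\<lambda>j. complex_of_real (cr r (j+1)) * HH j) has_sum infsum (yy r) UNIV) UNIV"
proof -
  have "(yy r has_sum infsum (yy r) UNIV) (Sigma UNIV (\<lambda>_. UNIV))"
    using has_sum_infsum[OF yy_summable[of r UNIV]] by simp
  thus ?thesis
    by (rule has_sum_Sigma'[where f = "yy r"]) (use yy_inner in auto)
qed

end


lemma has_sum_int_split:
  fixes f :: "int \<Rightarrow> complex"
  assumes "((\<lambda>a. f (int a + 1)) has_sum A) UNIV" "((\<lambda>a. f (- int a - 1)) has_sum B) UNIV"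
  shows "(f has_sum (f 0 + (A + B))) UNIV"
proof -
  have inj1: "inj (\<lambda>a::nat. int a + 1)" by (auto simp: inj_def)
  have inj2: "inj (\<lambda>a::nat. - int a - 1)" by (auto simp: inj_def)
  have 1: "(f has_sum A) (range (\<lambda>a::nat. int a + 1))"
    using has_sum_reindex[OF inj1, of f A] assms(1) by (simp add: o_def)
  have 2: "(f has_sum B) (range (\<lambda>a::nat. - int a - 1))"
    using has_sum_reindex[OF inj2, of f B] assms(2) by (simp add: o_def)
  have 12: "(f has_sum (A + B)) (range (\<lambda>a::nat. int a + 1) \<union> range (\<lambda>a::nat. - int a - 1))"
    by (rule has_sum_Un_disjoint[OF 1 2]) auto
  have 0: "(f has_sum f 0) {0}" using has_sum_finite[of "{0}" f] by simp
  have "(f has_sum (f 0 + (A + B))) ({0} \<union> (range (\<lambda>a::nat. int a + 1) \<union> range (\<lambda>a::nat. - int a - 1)))"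
    by (rule has_sum_Un_disjoint[OF 0 12]) auto
  also have "{0} \<union> (range (\<lambda>a::nat. int a + 1) \<union> range (\<lambda>a::nat. - int a - 1)) = UNIV"
  proof -
    have "n = 0 \<or> n \<in> range (\<lambda>a::nat. int a + 1) \<or> n \<in> range (\<lambda>a::nat. - int a - 1)" for n :: int
    proof -
      consider "n = 0" | "n > 0" | "n < 0" by linarith
      thus ?thesis
      proof cases
        case 2
        hence "n = int (nat (n - 1)) + 1" by simp
        thus ?thesis by blast
      next
        case 3
        hence "n = - int (nat (- n - 1)) - 1" by simp
        thus ?thesis by blast
      qed auto
    qed
    thus ?thesis by blast
  qed
  finally show ?thesis .
qed

lemma GL:
  fixes w x :: complex
  assumes "norm (w * x) < 1"
  shows "(\<lambda>b. w ^ (b+1) * (x ^ (b+1) - x ^ b)) sums ((1 - w) / (1 - w * x) - 1)"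
proof -
  have g: "(\<lambda>b. (w * x) ^ b) sums (1 / (1 - w * x))"
    using geometric_sums[OF assms] by simp
  have "(\<lambda>b. w * x * (w * x) ^ b - w * (w * x) ^ b) sums (w * x * (1 / (1 - w * x)) - w * (1 / (1 - w * x)))"
    by (intro sums_diff sums_mult g)
  moreover have "w * x * (1 / (1 - w * x)) - w * (1 / (1 - w * x)) = (1 - w) / (1 - w * x) - 1"
  proof -
    have d: "1 - w * x \<noteq> 0" using assms by auto
    have "w * x * (1 / (1 - w * x)) - w * (1 / (1 - w * x)) = (w * x - w) / (1 - w * x)"
      by (simp add: diff_divide_distrib)
    also have "(w * x - w) / (1 - w * x) = (1 - w) / (1 - w * x) - 1"
      by (subst divide_diff_eq_iff[OF d]) (simp add: algebra_simps)
    finally show ?thesis .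
  qed
  moreover have "(\<lambda>b. w * x * (w * x) ^ b - w * (w * x) ^ b) = (\<lambda>b. w ^ (b+1) * (x ^ (b+1) - x ^ b))"
    by (auto simp: power_mult_distrib algebra_simps)
  ultimately show ?thesis by simp
qed

definition e1 :: "nat \<Rightarrow> nat \<Rightarrow> nat" where "e1 T a = EE T a 0 + (a + 1)"

lemma EE_Suc: "EE T a (b+1) = e1 T a + b * (a+1)"
  by (simp add: EE_def e1_def algebra_simps)

lemma e1_ge: "T > 0 \<Longrightarrow> a \<le> e1 T a"
  by (simp add: e1_def)

lemma exp_pos:
  assumes "T > 0"
  shows "nat ((int a + 1) * (int T * (int a + 1) + 1) div 2) = e1 T a"
proof -
  define X where "X = (a+1)*(T*(a+1)-1)"
  obtain t where t: "T = Suc t" using assms by (cases T) auto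
  have tt: "T*(a+1) - 1 = t*(a+1) + a" by (simp add: t)
  have iX: "int X = (int a + 1) * (int T * (int a + 1) - 1)"
    unfolding X_def tt by (simp add: t algebra_simps)
  have eq: "(int a + 1) * (int T * (int a + 1) + 1) = int X + 2 * (int a + 1)"
    unfolding iX by (simp add: algebra_simps)
  have "(int a + 1) * (int T * (int a + 1) + 1) div 2 = int X div 2 + (int a + 1)"
    unfolding eq by simp
  also have "int X div 2 = int (X div 2)" by (simp add: zdiv_int)
  finally have "nat ((int a + 1) * (int T * (int a + 1) + 1) div 2) = X div 2 + (a + 1)"
    by simp
  thus ?thesis by (simp add: e1_def EE_def X_def)
qed

lemma exp_neg:
  assumes "T > 0"
  shows "nat ((- int a - 1) * (int T * (- int a - 1) + 1) div 2) = EE T a 0"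
proof -
  define X where "X = (a+1)*(T*(a+1)-1)"
  obtain t where t: "T = Suc t" using assms by (cases T) auto
  have tt: "T*(a+1) - 1 = t*(a+1) + a" by (simp add: t)
  have iX: "int X = (int a + 1) * (int T * (int a + 1) - 1)"
    unfolding X_def tt by (simp add: t algebra_simps)
  have eq: "(- int a - 1) * (int T * (- int a - 1) + 1) = int X"
    unfolding iX by (simp add: algebra_simps)
  have "nat ((- int a - 1) * (int T * (- int a - 1) + 1) div 2) = X div 2"
    unfolding eq by (simp add: zdiv_int)
  thus ?thesis by (simp add: EE_def X_def)
qed


context
  fixes T :: nat and q :: complex
  assumes T: "T > 0" and q: "norm q < 1" "q \<noteq> 0"
begin

definition tt :: "complex \<Rightarrow> int \<Rightarrow> complex" where
  "tt \<zeta> n = (-1) ^ nat \<bar>n\<bar> * q ^ nat (n * (int T * n + 1) div 2) / (1 - \<zeta> * q powi n)"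

definition ca :: "nat \<Rightarrow> complex" where
  "ca a = (-1) ^ (a+1) * q ^ (e1 T a)"

definition cc :: complex where
  "cc = 1 + 2 * suminf ca"

lemma tt_pos: "tt \<zeta> (int a + 1) = ca a / (1 - \<zeta> * q ^ (a+1))"
proof -
  have "q powi (int a + 1) = q ^ (a+1)"
    using q by (simp add: power_int_add)
  moreover have "nat \<bar>int a + 1\<bar> = a + 1" by simp
  ultimately show ?thesis
    by (simp add: tt_def ca_def exp_pos[OF T])
qed

lemma tt_neg: "tt \<zeta> (- int a - 1) = (-1) ^ (a+1) * q ^ (EE T a 0) / (1 - \<zeta> * inverse (q ^ (a+1)))"
proof -
  have "q powi (- int a - 1) = inverse (q ^ (a+1))"
  proof -
    have "- int a - 1 = - int (a+1)" by simp
    thus ?thesis by (simp only: power_int_minus power_int_of_nat)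
  qed
  moreover have "nat \<bar>- int a - 1\<bar> = a + 1" by simp
  ultimately show ?thesis
    by (simp add: tt_def exp_neg[OF T])
qed

lemma tt_0: "tt \<zeta> 0 = 1 / (1 - \<zeta>)"
  by (simp add: tt_def)

lemma norm_ca: "norm (ca a) \<le> norm q ^ a"
proof -
  have "norm (ca a) = norm q ^ e1 T a" by (simp add: ca_def norm_mult norm_power)
  also have "\<dots> \<le> norm q ^ a" using e1_ge[OF T, of a] q by (intro power_decreasing) auto
  finally show ?thesis .
qed

lemma ca_summable: "summable (\<lambda>a. norm (ca a))"
  by (rule summable_comparison_test'[where g = "\<lambda>a. norm q ^ a"]) (use q norm_ca in auto)

lemma hh_term:
  "ca a * (w ^ (b+1) * ((q ^ (a+1)) ^ (b+1) - (q ^ (a+1)) ^ b)) = w ^ (b+1) * hh T q a (b+1)"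
proof -
  define x where "x = q ^ (a+1)"
  define A where "A = q ^ (EE T a (b+1))"
  define E where "E = q ^ (e1 T a)"
  have "q ^ (EE T a (b+1)) = q ^ (e1 T a) * q ^ ((a+1)*b)"
    by (simp only: EE_Suc power_add mult.commute[of b])
  also have "q ^ ((a+1)*b) = (q ^ (a+1)) ^ b" by (rule power_mult)
  finally have p1: "E * x ^ b = A" by (simp add: E_def A_def x_def)
  have p2: "E * x ^ (b+1) = A * x"
    using p1 by (simp only: power_add power_one_right mult.assoc[symmetric])
  have e: "q ^ (EE T a (b+1) + a + 1) = A * x"
    by (simp only: A_def x_def add.assoc power_add)
  have hh: "hh T q a (b+1) = (-1) ^ a * (A - A * x)"
    unfolding hh_def[OF T q(1)] e A_def by (rule refl)
  have "ca a * (w ^ (b+1) * (x ^ (b+1) - x ^ b)) = (-1) ^ (a+1) * w ^ (b+1) * (E * x ^ (b+1) - E * x ^ b)"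
    by (simp add: ca_def E_def algebra_simps)
  also have "\<dots> = (-1) ^ (a+1) * w ^ (b+1) * (A * x - A)"
    by (simp only: p1 p2)
  also have "\<dots> = w ^ (b+1) * hh T q a (b+1)"
    unfolding hh by (simp add: algebra_simps)
  finally show ?thesis by (simp add: x_def)
qed

end


lemma hs_diff:
  fixes f g :: "'a \<Rightarrow> complex"
  assumes "(f has_sum a) A" "(g has_sum b) A"
  shows "((\<lambda>x. f x - g x) has_sum (a - b)) A"
proof -
  have "((\<lambda>x. - g x) has_sum (- b)) A" using assms(2) by (simp add: has_sum_uminus)
  from has_sum_add[OF assms(1) this] show ?thesis by simp
qed

lemma geo1:
  fixes x :: real
  assumes "0 \<le> x" "x < 1"
  shows "summable (\<lambda>b. c * x ^ (b+1))"
proof -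
  have "summable (\<lambda>b. (c * x) * x ^ b)" using assms by (intro summable_mult summable_geometric) auto
  thus ?thesis by (simp add: mult_ac)
qed

lemma fid:
  fixes \<zeta> x s :: complex
  assumes "\<zeta> \<noteq> 0" "x \<noteq> 0" "\<zeta> \<noteq> x"
  shows "s * x * ((1 - inverse \<zeta>) / (1 - inverse \<zeta> * x) - 1) = (1 - \<zeta>) * (s / (1 - \<zeta> * inverse x)) - s * x"
proof -
  have d1: "1 - inverse \<zeta> * x = (\<zeta> - x) / \<zeta>" using assms by (simp add: field_simps)
  have d2: "1 - \<zeta> * inverse x = (x - \<zeta>) / x" using assms by (simp add: field_simps)
  have n1: "\<zeta> - x \<noteq> 0" "x - \<zeta> \<noteq> 0" using assms by auto
  show ?thesis unfolding d1 d2 using assms n1 by (simp add: field_simps)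
qed

context
  fixes T :: nat and q :: complex
  assumes T: "T > 0" and q: "norm q < 1" "q \<noteq> 0"
begin

context
  fixes \<zeta> :: complex and R :: real
  assumes R: "R > 0" "R * norm q < 1" and z: "1/R \<le> norm \<zeta>" "norm \<zeta> \<le> R" "\<zeta> \<noteq> 1"
begin

lemma z0: "\<zeta> \<noteq> 0"
  using z(1) R(1) by auto

lemma winv: "norm (inverse \<zeta>) \<le> R"
proof -
  have "norm \<zeta> > 0" using z0 by simp
  hence "1 / norm \<zeta> \<le> R" using z(1) R(1) by (simp add: field_simps)
  thus ?thesis by (simp add: norm_inverse divide_inverse)
qed

lemma normx: "norm (q ^ (a+1)) \<le> norm q"
  using q by (simp add: norm_power power_le_one mult_left_le_one_le norm_mult)

lemma nzx: "norm (\<zeta> * q ^ (a+1)) \<le> R * norm q"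
  unfolding norm_mult by (intro mult_mono z(2) normx) (use R(1) in auto)

lemma nwx: "norm (inverse \<zeta> * q ^ (a+1)) \<le> R * norm q"
  unfolding norm_mult by (intro mult_mono winv normx) (use R(1) in auto)

lemma S1: "(\<lambda>b. \<zeta> ^ (b+1) * hh T q a (b+1)) sums ((1 - \<zeta>) * tt T q \<zeta> (int a + 1) - ca T q a)"
proof -
  let ?x = "q ^ (a+1)"
  have lt: "norm (\<zeta> * ?x) < 1" using nzx[of a] R(2) by linarith
  have D: "1 - \<zeta> * ?x \<noteq> 0" using lt by auto
  have s: "(\<lambda>b. ca T q a * (\<zeta> ^ (b+1) * (?x ^ (b+1) - ?x ^ b))) sums (ca T q a * ((1 - \<zeta>) / (1 - \<zeta> * ?x) - 1))"
    by (intro sums_mult GL lt)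
  have v: "ca T q a * ((1 - \<zeta>) / (1 - \<zeta> * ?x) - 1) = (1 - \<zeta>) * tt T q \<zeta> (int a + 1) - ca T q a"
    unfolding tt_pos[OF T q] using D by (simp add: field_simps)
  have h: "(\<lambda>b. ca T q a * (\<zeta> ^ (b+1) * (?x ^ (b+1) - ?x ^ b))) = (\<lambda>b. \<zeta> ^ (b+1) * hh T q a (b+1))"
    by (rule ext, rule hh_term[OF T q])
  from s show ?thesis unfolding h v .
qed

lemma S2: "(\<lambda>b. inverse \<zeta> ^ (b+1) * hh T q a (b+1)) sums ((1 - \<zeta>) * tt T q \<zeta> (- int a - 1) - ca T q a)"
proof -
  let ?x = "q ^ (a+1)"
  have lt: "norm (inverse \<zeta> * ?x) < 1" using nwx[of a] R(2) by linarith
  have s: "(\<lambda>b. ca T q a * (inverse \<zeta> ^ (b+1) * (?x ^ (b+1) - ?x ^ b))) sums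
          (ca T q a * ((1 - inverse \<zeta>) / (1 - inverse \<zeta> * ?x) - 1))"
    by (intro sums_mult GL lt)
  have v: "ca T q a * ((1 - inverse \<zeta>) / (1 - inverse \<zeta> * ?x) - 1) = (1 - \<zeta>) * tt T q \<zeta> (- int a - 1) - ca T q a"
  proof -
    have x0: "?x \<noteq> 0" using q by simp
    have "norm ?x \<le> norm q" by (rule normx)
    also have "norm q < 1 / R" using R by (simp add: field_simps)
    also have "\<dots> \<le> norm \<zeta>" by (rule z(1))
    finally have "\<zeta> \<noteq> ?x" by auto
    have cax: "ca T q a = ((-1) ^ (a+1) * q ^ (EE T a 0)) * ?x"
      by (simp add: ca_def[OF T q] e1_def power_add mult_ac)
    show ?thesis unfolding tt_neg[OF T q] cax
      by (rule fid[OF z0 x0 \<open>\<zeta> \<noteq> ?x\<close>])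
  qed
  have h: "(\<lambda>b. ca T q a * (inverse \<zeta> ^ (b+1) * (?x ^ (b+1) - ?x ^ b))) = (\<lambda>b. inverse \<zeta> ^ (b+1) * hh T q a (b+1))"
    by (rule ext, rule hh_term[OF T q])
  from s show ?thesis unfolding h v .
qed

lemma norm_tpos: "norm (tt T q \<zeta> (int a + 1)) \<le> norm q ^ a / (1 - R * norm q)"
proof -
  have "1 - R * norm q \<le> norm (1::complex) - norm (\<zeta> * q ^ (a+1))" using nzx[of a] by simp
  also have "\<dots> \<le> norm (1 - \<zeta> * q ^ (a+1))" by (rule norm_triangle_ineq2)
  finally have d: "1 - R * norm q \<le> norm (1 - \<zeta> * q ^ (a+1))" .
  have "norm (tt T q \<zeta> (int a + 1)) = norm (ca T q a) / norm (1 - \<zeta> * q ^ (a+1))"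
    unfolding tt_pos[OF T q] by (simp add: norm_divide)
  also have "\<dots> \<le> norm q ^ a / (1 - R * norm q)"
    by (rule frac_le) (use norm_ca[OF T q] d R in auto)
  finally show ?thesis .
qed

lemma norm_tneg: "norm (tt T q \<zeta> (- int a - 1)) \<le> norm q ^ a / (1/R - norm q)"
proof -
  let ?x = "q ^ (a+1)"
  have x0: "?x \<noteq> 0" using q by simp
  have xq: "norm ?x \<le> norm q" by (rule normx)
  have "1/R - norm q \<le> norm \<zeta> - norm ?x" using xq z(1) by linarith
  also have "\<dots> \<le> norm (?x - \<zeta>)" using norm_triangle_ineq2[of \<zeta> ?x] by (simp add: norm_minus_commute)
  finally have d: "1/R - norm q \<le> norm (?x - \<zeta>)" .
  have pos: "1/R - norm q > 0" using R by (simp add: field_simps)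
  hence xz: "?x - \<zeta> \<noteq> 0" using d by auto
  have cax: "ca T q a = ((-1) ^ (a+1) * q ^ (EE T a 0)) * ?x"
    by (simp add: ca_def[OF T q] e1_def power_add mult_ac)
  have "tt T q \<zeta> (- int a - 1) = ca T q a / (?x - \<zeta>)"
    unfolding tt_neg[OF T q] cax using x0 xz by (simp add: field_simps)
  hence "norm (tt T q \<zeta> (- int a - 1)) = norm (ca T q a) / norm (?x - \<zeta>)"
    by (simp add: norm_divide)
  also have "\<dots> \<le> norm q ^ a / (1/R - norm q)"
    by (rule frac_le) (use norm_ca[OF T q] d pos in auto)
  finally show ?thesis .
qed

lemma tpos_summable: "summable (\<lambda>a. norm (tt T q \<zeta> (int a + 1)))"
proof (rule summable_comparison_test')
  show "summable (\<lambda>a. norm q ^ a / (1 - R * norm q))"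
    using q by (intro summable_divide summable_geometric) auto
qed (use norm_tpos in auto)

lemma tneg_summable: "summable (\<lambda>a. norm (tt T q \<zeta> (- int a - 1)))"
proof (rule summable_comparison_test')
  show "summable (\<lambda>a. norm q ^ a / (1/R - norm q))"
    using q by (intro summable_divide summable_geometric) auto
qed (use norm_tneg in auto)

definition zz :: "nat \<Rightarrow> nat \<Rightarrow> complex" where
  "zz a b = (\<zeta> ^ (b+1) + inverse \<zeta> ^ (b+1)) * hh T q a (b+1)"

lemma norm_zz: "norm (zz a b) \<le> norm q ^ a * (4 * (R * norm q) ^ (b+1))"
proof -
  have "norm (\<zeta> ^ (b+1) + inverse \<zeta> ^ (b+1)) \<le> norm \<zeta> ^ (b+1) + norm (inverse \<zeta>) ^ (b+1)"
    by (rule order_trans[OF norm_triangle_ineq]) (simp add: norm_power norm_mult)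
  also have "\<dots> \<le> R ^ (b+1) + R ^ (b+1)"
    by (intro add_mono power_mono z(2) winv) auto
  finally have 1: "norm (\<zeta> ^ (b+1) + inverse \<zeta> ^ (b+1)) \<le> 2 * R ^ (b+1)" by simp
  have 2: "norm (hh T q a (b+1)) \<le> 2 * norm q ^ a * norm q ^ (b+1)"
    by (rule norm_hh[OF T q(1)])
  have "norm (zz a b) \<le> (2 * R ^ (b+1)) * (2 * norm q ^ a * norm q ^ (b+1))"
    unfolding zz_def norm_mult by (intro mult_mono 1 2) (use R in auto)
  also have "\<dots> = norm q ^ a * (4 * (R * norm q) ^ (b+1))"
    by (simp add: power_mult_distrib mult_ac)
  finally show ?thesis .
qed

lemma zz_summable: "(\<lambda>(a, b). zz a b) summable_on UNIV"
proof -
  have f: "(\<lambda>a. norm q ^ a) summable_on UNIV"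
    using q by (intro nat_summable_on summable_geometric) auto
  have g: "(\<lambda>b. 4 * (R * norm q) ^ (b+1)) summable_on UNIV"
    using R by (intro nat_summable_on geo1) auto
  have "(\<lambda>(a, b). norm q ^ a * (4 * (R * norm q) ^ (b+1))) summable_on (UNIV \<times> UNIV)"
    by (rule prod_summable_nonneg[OF f g]) (use R in auto)
  hence "(\<lambda>x. norm ((\<lambda>(a, b). zz a b) x)) summable_on (UNIV \<times> UNIV)"
    by (rule Infinite_Sum.abs_summable_on_comparison_test') (use norm_zz in \<open>auto simp: case_prod_beta simp del: power_Suc\<close>)
  hence "(\<lambda>(a, b). zz a b) summable_on (UNIV \<times> UNIV)" by (rule abs_summable_summable)
  thus ?thesis by simp
qed

lemma zz_inner1:
  "((\<lambda>b. zz a b) has_sum ((1 - \<zeta>) * (tt T q \<zeta> (int a + 1) + tt T q \<zeta> (- int a - 1)) - 2 * ca T q a)) UNIV"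
proof (rule norm_summable_imp_has_sum)
  show "summable (\<lambda>b. norm (zz a b))"
  proof (rule summable_comparison_test')
    show "summable (\<lambda>b. norm q ^ a * (4 * (R * norm q) ^ (b+1)))"
      using R by (intro summable_mult geo1) auto
  qed (use norm_zz in auto)
  have "(\<lambda>b. \<zeta> ^ (b+1) * hh T q a (b+1) + inverse \<zeta> ^ (b+1) * hh T q a (b+1)) sums
        (((1 - \<zeta>) * tt T q \<zeta> (int a + 1) - ca T q a) + ((1 - \<zeta>) * tt T q \<zeta> (- int a - 1) - ca T q a))"
    by (intro sums_add S1 S2)
  thus "(\<lambda>b. zz a b) sums ((1 - \<zeta>) * (tt T q \<zeta> (int a + 1) + tt T q \<zeta> (- int a - 1)) - 2 * ca T q a)"
    by (simp add: zz_def algebra_simps)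
qed

lemma zz_inner2:
  "((\<lambda>a. zz a b) has_sum ((\<zeta> ^ (b+1) + inverse \<zeta> ^ (b+1)) * HH T q b)) UNIV"
  unfolding zz_def
  by (intro has_sum_cmult_right norm_summable_imp_has_sum hh_summable[OF T q(1)] HH_sums[OF T q(1)])

lemma PF_main:
  "(\<lambda>b. (\<zeta> ^ (b+1) + inverse \<zeta> ^ (b+1)) * HH T q b) sums ((1 - \<zeta>) * infsum (tt T q \<zeta>) UNIV - cc T q)"
proof -
  define ZZ where "ZZ = infsum (\<lambda>(a, b). zz a b) UNIV"
  have hs: "((\<lambda>(a, b). zz a b) has_sum ZZ) (Sigma UNIV (\<lambda>_. UNIV))"
    unfolding ZZ_def using has_sum_infsum[OF zz_summable] by simp
  have 1: "((\<lambda>a. (1 - \<zeta>) * (tt T q \<zeta> (int a + 1) + tt T q \<zeta> (- int a - 1)) - 2 * ca T q a) has_sum ZZ) UNIV"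
    by (rule has_sum_Sigma'[OF hs]) (use zz_inner1 in auto)
  have hs2: "((\<lambda>(b, a). zz a b) has_sum ZZ) (Sigma UNIV (\<lambda>_. UNIV))"
    using has_sum_swap[THEN iffD1, OF hs] by simp
  have 2: "((\<lambda>b. (\<zeta> ^ (b+1) + inverse \<zeta> ^ (b+1)) * HH T q b) has_sum ZZ) UNIV"
    by (rule has_sum_Sigma'[OF hs2]) (use zz_inner2 in auto)
  define A where "A = suminf (\<lambda>a. tt T q \<zeta> (int a + 1))"
  define B where "B = suminf (\<lambda>a. tt T q \<zeta> (- int a - 1))"
  define C where "C = suminf (ca T q)"
  have hA: "((\<lambda>a. tt T q \<zeta> (int a + 1)) has_sum A) UNIV"
    unfolding A_def by (intro norm_summable_imp_has_sum tpos_summable summable_sums summable_norm_cancel)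
  have hB: "((\<lambda>a. tt T q \<zeta> (- int a - 1)) has_sum B) UNIV"
    unfolding B_def by (intro norm_summable_imp_has_sum tneg_summable summable_sums summable_norm_cancel)
  have hC: "(ca T q has_sum C) UNIV"
    unfolding C_def by (intro norm_summable_imp_has_sum ca_summable[OF T q] summable_sums summable_norm_cancel)
  have 3: "((\<lambda>a. (1 - \<zeta>) * (tt T q \<zeta> (int a + 1) + tt T q \<zeta> (- int a - 1)) - 2 * ca T q a) has_sum
            ((1 - \<zeta>) * (A + B) - 2 * C)) UNIV"
    by (intro hs_diff has_sum_cmult_right has_sum_add hA hB hC)
  have ZZ: "ZZ = (1 - \<zeta>) * (A + B) - 2 * C"
    using 1 3 has_sum_unique by blast
  have "(tt T q \<zeta> has_sum (tt T q \<zeta> 0 + (A + B))) UNIV"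
    by (rule has_sum_int_split[OF hA hB])
  hence inf: "infsum (tt T q \<zeta>) UNIV = 1 / (1 - \<zeta>) + (A + B)"
    by (simp add: infsumI tt_0[OF T q])
  have "(1 - \<zeta>) * infsum (tt T q \<zeta>) UNIV - cc T q = ZZ"
    unfolding inf ZZ cc_def[OF T q] C_def[symmetric] using z(3) by (simp add: field_simps)
  with 2 show ?thesis by (simp add: has_sum_imp_sums)
qed

end

end


lemma td_deriv:
  fixes K c u :: complex
  shows "((\<lambda>u. K * c ^ d * (exp (c * u) + (-1) ^ d * exp (- (c * u)))) has_field_derivative
          (K * c ^ Suc d * (exp (c * u) + (-1) ^ Suc d * exp (- (c * u))))) (at u)"
  by (auto intro!: derivative_eq_intros simp: algebra_simps)

lemma norm_exp_le:
  fixes u :: complex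
  assumes "norm u < \<epsilon>" and that: "norm s = 1"
  shows "norm (exp (s * (2 * of_real pi * \<i> * of_nat j * u))) \<le> exp (2 * pi * \<epsilon>) ^ j"
proof -
  have "norm (exp (s * (2 * of_real pi * \<i> * of_nat j * u))) \<le> exp (norm (s * (2 * of_real pi * \<i> * of_nat j * u)))"
    by (rule norm_exp)
  also have "norm (s * (2 * of_real pi * \<i> * of_nat j * u)) = 2 * pi * real j * norm u"
    using that by (simp add: norm_mult)
  also have "exp (2 * pi * real j * norm u) \<le> exp (real j * (2 * pi * \<epsilon>))"
  proof -
    have "real j * norm u \<le> real j * \<epsilon>" using assms(1) by (intro mult_left_mono) auto
    hence "2 * pi * (real j * norm u) \<le> 2 * pi * (real j * \<epsilon>)" by (rule mult_left_mono) auto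
    thus ?thesis by (simp add: mult_ac)
  qed
  also have "\<dots> = exp (2 * pi * \<epsilon>) ^ j" by (rule exp_of_nat_mult)
  finally show ?thesis .
qed

lemma series_step:
  fixes K :: "nat \<Rightarrow> complex" and C \<sigma> \<epsilon> :: real
  assumes eps: "\<epsilon> > 0" and Kb: "\<And>j. j \<ge> 1 \<Longrightarrow> norm (K j) \<le> C * \<sigma> ^ j"
    and \<sigma>: "\<sigma> \<ge> 0" "exp (2 * pi * \<epsilon>) * \<sigma> < 1"
  defines "td \<equiv> \<lambda>d j u. K j * (2 * of_real pi * \<i> * of_nat j) ^ d *
             (exp (2 * of_real pi * \<i> * of_nat j * u) + (-1) ^ d * exp (- (2 * of_real pi * \<i> * of_nat j * u)))"
  shows "\<exists>g g'. \<forall>x\<in>ball 0 \<epsilon>. ((\<lambda>j. td d j x) sums g x) \<and> ((\<lambda>j. td (Suc d) j x) sums g' x) \<and>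
           (g has_field_derivative g' x) (at x)"
proof -
  define R where "R = exp (2 * pi * \<epsilon>)"
  define h where "h = (\<lambda>j. 2 * \<bar>C\<bar> * (2 * pi) ^ d * ((real j + 1) ^ d * (R * \<sigma>) ^ j))"
  have R0: "R > 0" by (simp add: R_def)
  have hsum: "summable h"
    unfolding h_def using \<sigma> R0 by (intro summable_mult polygeom) (auto simp: R_def)
  have hfd: "(td d n has_field_derivative td (Suc d) n x) (at x)" for n x
    unfolding td_def by (rule td_deriv)
  have tog: "\<forall>\<^sub>F j in sequentially. \<forall>x\<in>ball 0 \<epsilon>. norm (td d j x) \<le> h j"
    using eventually_ge_at_top[of 1]
  proof eventually_elim
    case (elim j)
    show ?case
    proof
      fix x :: complex assume x: "x \<in> ball 0 \<epsilon>"
      hence xn: "norm x < \<epsilon>" by simp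
      have e1: "norm (exp (2 * of_real pi * \<i> * of_nat j * x)) \<le> R ^ j"
        using norm_exp_le[OF xn, of 1 j] by (simp add: R_def)
      have e2: "norm (exp (- (2 * of_real pi * \<i> * of_nat j * x))) \<le> R ^ j"
        using norm_exp_le[OF xn, of "-1" j] by (simp add: R_def)
      have E: "norm (exp (2 * of_real pi * \<i> * of_nat j * x) + (-1) ^ d * exp (- (2 * of_real pi * \<i> * of_nat j * x)))
                 \<le> 2 * R ^ j"
      proof -
        have "norm (exp (2 * of_real pi * \<i> * of_nat j * x) + (-1) ^ d * exp (- (2 * of_real pi * \<i> * of_nat j * x)))
              \<le> norm (exp (2 * of_real pi * \<i> * of_nat j * x)) + norm ((-1) ^ d * exp (- (2 * of_real pi * \<i> * of_nat j * x)))"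
          by (rule norm_triangle_ineq)
        also have "norm ((-1) ^ d * exp (- (2 * of_real pi * \<i> * of_nat j * x))) = norm (exp (- (2 * of_real pi * \<i> * of_nat j * x)))"
          by (simp add: norm_mult norm_power)
        finally show ?thesis using e1 e2 by simp
      qed
      have c: "norm ((2 * of_real pi * \<i> * of_nat j :: complex) ^ d) \<le> (2 * pi) ^ d * (real j + 1) ^ d"
      proof -
        have "norm ((2 * of_real pi * \<i> * of_nat j :: complex) ^ d) = (2 * pi * real j) ^ d"
          by (simp add: norm_power norm_mult)
        also have "\<dots> \<le> (2 * pi * (real j + 1)) ^ d"
          by (intro power_mono mult_left_mono) auto
        finally show ?thesis by (simp add: power_mult_distrib)
      qed
      have k: "norm (K j) \<le> \<bar>C\<bar> * \<sigma> ^ j"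
        using Kb[OF elim] \<sigma> by (smt (verit) mult_right_mono zero_le_power)
      have "norm (td d j x) = norm (K j) * norm ((2 * of_real pi * \<i> * of_nat j :: complex) ^ d) *
              norm (exp (2 * of_real pi * \<i> * of_nat j * x) + (-1) ^ d * exp (- (2 * of_real pi * \<i> * of_nat j * x)))"
        unfolding td_def by (simp only: norm_mult)
      also have "\<dots> \<le> (\<bar>C\<bar> * \<sigma> ^ j) * ((2 * pi) ^ d * (real j + 1) ^ d) * (2 * R ^ j)"
        by (intro mult_mono k c E) (use \<sigma> in auto)
      also have "\<dots> = h j"
        by (simp add: h_def power_mult_distrib mult_ac)
      finally show "norm (td d j x) \<le> h j" .
    qed
  qed
  obtain g g' where "\<forall>x\<in>ball 0 \<epsilon>. ((\<lambda>n. td d n x) sums g x) \<and> ((\<lambda>n. td (Suc d) n x) sums g' x) \<and>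
                      (g has_field_derivative g' x) (at x)"
    using series_and_derivative_comparison[OF open_ball hsum hfd tog] by blast
  thus ?thesis by blast
qed

definition tdK :: "(nat \<Rightarrow> complex) \<Rightarrow> nat \<Rightarrow> nat \<Rightarrow> complex \<Rightarrow> complex" where
  "tdK K d j u = K j * (2 * of_real pi * \<i> * of_nat j) ^ d *
             (exp (2 * of_real pi * \<i> * of_nat j * u) + (-1) ^ d * exp (- (2 * of_real pi * \<i> * of_nat j * u)))"

definition FK :: "(nat \<Rightarrow> complex) \<Rightarrow> nat \<Rightarrow> complex \<Rightarrow> complex" where
  "FK K d u = suminf (\<lambda>j. tdK K d j u)"

context
  fixes K :: "nat \<Rightarrow> complex" and C \<sigma> \<epsilon> :: real
  assumes eps: "\<epsilon> > 0" and Kb: "\<And>j. j \<ge> 1 \<Longrightarrow> norm (K j) \<le> C * \<sigma> ^ j"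
    and \<sigma>: "\<sigma> \<ge> 0" "exp (2 * pi * \<epsilon>) * \<sigma> < 1"
begin

lemma FK_step:
  assumes u: "u \<in> ball 0 \<epsilon>"
  shows "(\<lambda>j. tdK K d j u) sums FK K d u \<and> (FK K d has_field_derivative FK K (Suc d) u) (at u)"
proof -
  obtain g g' where gg: "\<forall>x\<in>ball 0 \<epsilon>. ((\<lambda>j. tdK K d j x) sums g x) \<and> ((\<lambda>j. tdK K (Suc d) j x) sums g' x) \<and>
           (g has_field_derivative g' x) (at x)"
    using series_step[OF eps Kb \<sigma>, of d] unfolding tdK_def[abs_def] by blast
  have eq: "FK K d x = g x" if "x \<in> ball 0 \<epsilon>" for x
    using gg that unfolding FK_def by (simp add: sums_iff)
  have eq': "FK K (Suc d) u = g' u"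
    using gg u unfolding FK_def by (simp add: sums_iff)
  have "(g has_field_derivative g' u) (at u)" using gg u by blast
  hence "(FK K d has_field_derivative g' u) (at u)"
    by (rule has_field_derivative_transform_within_open[OF _ open_ball u]) (simp add: eq)
  moreover have "(\<lambda>j. tdK K d j u) sums FK K d u"
    using gg u eq[OF u] by simp
  ultimately show ?thesis using eq' by simp
qed

lemma FK_higher: "u \<in> ball 0 \<epsilon> \<Longrightarrow> (deriv ^^ d) (FK K 0) u = FK K d u"
proof (induction d arbitrary: u)
  case 0 thus ?case by simp
next
  case (Suc d)
  have "(deriv ^^ Suc d) (FK K 0) u = deriv ((deriv ^^ d) (FK K 0)) u" by simp
  also have "\<dots> = deriv (FK K d) u"
  proof (rule deriv_cong_ev)
    have "eventually (\<lambda>x. x \<in> ball 0 \<epsilon>) (nhds u)"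
      using Suc.prems by (intro eventually_nhds_in_open) auto
    thus "eventually (\<lambda>x. (deriv ^^ d) (FK K 0) x = FK K d x) (nhds u)"
      by eventually_elim (rule Suc.IH)
  qed simp
  also have "\<dots> = FK K (Suc d) u"
    using FK_step[OF Suc.prems, of d] by (intro DERIV_imp_deriv) auto
  finally show ?case .
qed

lemma FK_holo: "FK K 0 holomorphic_on ball 0 \<epsilon>"
  unfolding holomorphic_on_open[OF open_ball] using FK_step by blast

end


lemma M_value:
  fixes T r :: nat and q :: complex
  assumes T: "T > 0" and q: "norm q < 1" "q \<noteq> 0" and r: "r > 0"
  shows "M_T T r q = inverse (PP q) * infsum (yy T q r) UNIV"
proof -
  define \<rho> where "\<rho> = (1 + norm q) / 2"
  have \<rho>: "0 \<le> \<rho>" "\<rho> < 1" "norm q < \<rho>" using q by (auto simp: \<rho>_def)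
  have rad: "ereal \<rho> \<le> fps_conv_radius (cfps (Gfps T r))"
    by (rule G_radius[OF r \<rho>(1,2)])
  have radpos: "fps_conv_radius (cfps (Gfps T r)) > 0"
    using rad \<rho> q by (smt (verit) ereal_less_eq(3) less_ereal.simps(1) norm_ge_zero order_less_le_trans zero_ereal_def)
  define Fe where "Fe = (\<lambda>z. inverse (PP z) * eval_fps (cfps (Gfps T r)) z)"
  have ex: "Fe has_fps_expansion (cfps (inverse qpoch_fps) * cfps (Gfps T r))"
    unfolding Fe_def by (intro has_fps_expansion_mult inv_PP_fps eval_fps_has_fps_expansion radpos)
  have holo: "Fe holomorphic_on eball 0 (ereal \<rho>)"
  proof -
    have "(\<lambda>z. inverse (PP z)) holomorphic_on ball 0 \<rho>"
      by (rule holomorphic_on_subset[OF inv_PP_holo]) (use \<rho> in auto)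
    moreover have "eval_fps (cfps (Gfps T r)) holomorphic_on ball 0 \<rho>"
    proof (rule holomorphic_on_eval_fps)
      show "ball 0 \<rho> \<subseteq> eball 0 (fps_conv_radius (cfps (Gfps T r)))"
        using rad by (auto simp: subset_iff) (metis less_ereal.simps(1) order_less_le_trans)
    qed
    ultimately show ?thesis unfolding Fe_def eball_ereal by (rule holomorphic_on_mult)
  qed
  have "(\<lambda>n. fps_nth (cfps (inverse qpoch_fps) * cfps (Gfps T r)) n * q ^ n) sums Fe q"
    by (rule has_fps_expansion_imp_sums_complex[OF ex holo]) (use \<rho> in auto)
  moreover have "fps_nth (cfps (inverse qpoch_fps) * cfps (Gfps T r)) n = complex_of_real (m_T T r n)" for n
    by (simp only: cfps_mult[symmetric] cfps_nth m_T_eq)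
  ultimately have 1: "(\<lambda>n. complex_of_real (m_T T r n) * q ^ n) sums Fe q" by simp
  have "(\<lambda>k. complex_of_real (gg T r k) * q ^ k) sums infsum (yy T q r) UNIV"
    by (rule has_sum_imp_sums[OF G_hassum1[OF T q(1) r]])
  hence "eval_fps (cfps (Gfps T r)) q = infsum (yy T q r) UNIV"
    unfolding eval_fps_def by (simp add: Gfps_def sums_iff)
  with 1 show ?thesis unfolding M_T_def Fe_def by (simp add: sums_iff)
qed

lemma div_comm: "(a::complex) * s / p = a / p * s" by simp

lemma div_aux: "(x - c) / p + c / p = x / (p::complex)" by (simp add: diff_divide_distrib)

lemma exp_j: "exp (2 * of_real pi * \<i> * of_nat j * u) = exp (complex_of_real (2 * pi) * \<i> * u) ^ j"
proof -
  have "2 * of_real pi * \<i> * of_nat j * u = of_nat j * (complex_of_real (2 * pi) * \<i> * u)"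
    by (simp add: mult_ac)
  thus ?thesis by (simp only: exp_of_nat_mult)
qed

lemma exp_mj: "exp (- (2 * of_real pi * \<i> * of_nat j * u)) = inverse (exp (complex_of_real (2 * pi) * \<i> * u)) ^ j"
  by (simp only: exp_minus exp_j power_inverse)

theorem mainTheorem2:
  fixes T r :: nat and q :: complex
  assumes "odd T" and "T > 0" and "norm q < 1" and "q \<noteq> 0" and "r > 0"
  shows "\<exists>e>0. \<exists>f. f holomorphic_on ball 0 e \<and>
           (\<forall>u\<in>ball 0 e - {0}. f u = scriptM T q u) \<and>
           (deriv ^^ r) f 0 = (2 * pi * \<i>) ^ r * M_T T r q"
proof -
  note T = assms(2) and q = assms(3,4) and r = assms(5)
  define P where "P = PP q"
  have P0: "P \<noteq> 0" unfolding P_def by (rule PP_nz[OF q(1)])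
  define K where "K = (\<lambda>j. (if j = 0 then cc T q / 2 else HH T q (j - 1)) / P)"
  define R where "R = (1 / norm q + 1) / 2"
  have nq: "norm q > 0" using q by simp
  have R1: "R > 1" using q nq by (simp add: R_def field_simps)
  have Rq: "R * norm q < 1" using q nq by (simp add: R_def field_simps)
  define \<epsilon> where "\<epsilon> = min (1/2) (ln R / (2 * pi))"
  have lnR: "ln R > 0" using R1 by simp
  have eps: "\<epsilon> > 0" using lnR by (simp add: \<epsilon>_def)
  have expeps: "exp (2 * pi * \<epsilon>) \<le> R"
  proof -
    have "2 * pi * \<epsilon> \<le> ln R" using pi_gt_zero by (simp add: \<epsilon>_def min_def field_simps)
    hence "exp (2 * pi * \<epsilon>) \<le> exp (ln R)" by simp
    thus ?thesis using R1 by simp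
  qed
  have Kb: "norm (K j) \<le> (2 / (1 - norm q) / norm P) * norm q ^ j" if "j \<ge> 1" for j
  proof -
    have "norm (K j) = norm (HH T q (j - 1)) / norm P" using that by (simp add: K_def norm_divide)
    also have "\<dots> \<le> (2 * norm q ^ (j - 1 + 1) / (1 - norm q)) / norm P"
      by (rule divide_right_mono[OF HH_bound[OF T q(1)]]) simp
    also have "j - 1 + 1 = j" using that by simp
    finally show ?thesis by (simp add: field_simps)
  qed
  have \<sigma>: "norm q \<ge> 0" "exp (2 * pi * \<epsilon>) * norm q < 1"
  proof -
    show "norm q \<ge> 0" by simp
    have "exp (2 * pi * \<epsilon>) * norm q \<le> R * norm q" by (rule mult_right_mono[OF expeps]) simp
    thus "exp (2 * pi * \<epsilon>) * norm q < 1" using Rq by linarith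
  qed
  define f where "f = FK K 0"
  have holo: "f holomorphic_on ball 0 \<epsilon>"
    unfolding f_def by (rule FK_holo[OF eps Kb \<sigma>])
  have eq: "f u = scriptM T q u" if u: "u \<in> ball 0 \<epsilon> - {0}" for u
  proof -
    define \<zeta> where "\<zeta> = exp (complex_of_real (2 * pi) * \<i> * u)"
    have un: "norm u < \<epsilon>" using u by simp
    have nz: "norm \<zeta> = exp (- (2 * pi * Im u))" by (simp add: \<zeta>_def)
    have imu: "\<bar>Im u\<bar> < \<epsilon>" using abs_Im_le_cmod[of u] un by linarith
    have z2: "norm \<zeta> \<le> R"
    proof -
      have "2 * pi * (- Im u) \<le> 2 * pi * \<epsilon>" by (rule mult_left_mono) (use imu in auto)
      hence "- (2 * pi * Im u) \<le> 2 * pi * \<epsilon>" by simp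
      hence "norm \<zeta> \<le> exp (2 * pi * \<epsilon>)" unfolding nz by simp
      thus ?thesis using expeps by linarith
    qed
    have z1: "1 / R \<le> norm \<zeta>"
    proof -
      have "2 * pi * Im u \<le> 2 * pi * \<epsilon>" by (rule mult_left_mono) (use imu in auto)
      hence "- (2 * pi * \<epsilon>) \<le> - (2 * pi * Im u)" by simp
      hence "exp (- (2 * pi * \<epsilon>)) \<le> norm \<zeta>" unfolding nz by simp
      moreover have "1 / R \<le> exp (- (2 * pi * \<epsilon>))"
        using expeps R1 by (simp add: exp_minus field_simps)
      ultimately show ?thesis by linarith
    qed
    have z3: "\<zeta> \<noteq> 1"
    proof
      assume "\<zeta> = 1"
      then obtain n :: int where "Re (complex_of_real (2 * pi) * \<i> * u) = 0"
        and n: "Im (complex_of_real (2 * pi) * \<i> * u) = of_int (2 * n) * pi"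
        unfolding \<zeta>_def exp_eq_1 by blast
      hence re: "Im u = 0" and im: "Re u = of_int n" by auto
      have "\<bar>Re u\<bar> < 1/2" using abs_Re_le_cmod[of u] un by (simp add: \<epsilon>_def)
      hence "n = 0" using im by linarith
      hence "u = 0" using re im by (simp add: complex_eq_iff)
      thus False using u by simp
    qed
    have R0: "R > 0" using R1 by simp
    have pf: "(\<lambda>b. (\<zeta> ^ (b+1) + inverse \<zeta> ^ (b+1)) * HH T q b) sums ((1 - \<zeta>) * infsum (tt T q \<zeta>) UNIV - cc T q)"
      by (rule PF_main[OF T q R0 Rq z1 z2 z3])
    have td0: "tdK K 0 j u = K j * (\<zeta> ^ j + inverse \<zeta> ^ j)" for j
      unfolding tdK_def exp_j exp_mj \<zeta>_def[symmetric] by simp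
    have "(\<lambda>b. tdK K 0 (Suc b) u) = (\<lambda>b. (\<zeta> ^ (b+1) + inverse \<zeta> ^ (b+1)) * HH T q b / P)"
      by (rule ext) (simp only: td0, simp add: K_def)
    with pf have A: "(\<lambda>b. tdK K 0 (Suc b) u) sums (((1 - \<zeta>) * infsum (tt T q \<zeta>) UNIV - cc T q) / P)"
      by (simp add: sums_divide)
    have B: "tdK K 0 0 u = cc T q / P" by (simp add: tdK_def K_def)
    have "(\<lambda>j. tdK K 0 j u) sums (((1 - \<zeta>) * infsum (tt T q \<zeta>) UNIV - cc T q) / P + cc T q / P)"
      using sums_Suc_iff[THEN iffD1, OF A] unfolding B .
    hence "f u = ((1 - \<zeta>) * infsum (tt T q \<zeta>) UNIV - cc T q) / P + cc T q / P"
      by (simp add: f_def FK_def sums_iff)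
    also have "\<dots> = (1 - \<zeta>) * infsum (tt T q \<zeta>) UNIV / P" by (rule div_aux)
    also have "\<dots> = scriptM T q u"
      unfolding scriptM_def P_def PP_def \<zeta>_def tt_def[OF T q, abs_def] by (rule div_comm)
    finally show ?thesis .
  qed
  have der: "(deriv ^^ r) f 0 = (2 * pi * \<i>) ^ r * M_T T r q"
  proof -
    have "(deriv ^^ r) f 0 = FK K r 0"
      unfolding f_def
    proof (rule FK_higher[OF eps Kb \<sigma>])
      show "(0::complex) \<in> ball 0 \<epsilon>" using eps by simp
    qed
    define G where "G = infsum (yy T q r) UNIV"
    have g2: "(\<lambda>b. complex_of_real (cr r (b+1)) * HH T q b) sums G"
      unfolding G_def by (rule has_sum_imp_sums[OF G_hassum2[OF T q(1)]])
    have eqn: "(\<lambda>b. tdK K r (Suc b) 0) = (\<lambda>b. (complex_of_real (2 * pi) * \<i>) ^ r / P * (complex_of_real (cr r (b+1)) * HH T q b))"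
    proof (rule ext)
      fix b
      define c where "c = (2 * of_real pi * \<i> :: complex)"
      define n where "n = (of_nat (Suc b) :: complex)"
      have cc: "complex_of_real (2 * pi) * \<i> = c" by (simp add: c_def)
      define m where "m = real (Suc b)"
      have nm: "n = complex_of_real m" by (simp add: n_def m_def)
      have pm: "(- m) ^ r = (-1) ^ r * m ^ r" by (rule power_minus)
      have "cr r (b+1) = m ^ r + (-1) ^ r * m ^ r" unfolding cr_def m_def[symmetric] Suc_eq_plus1[symmetric] pm ..
      hence k1: "complex_of_real (cr r (b+1)) = n ^ r + (-1) ^ r * n ^ r"
        by (simp only: nm of_real_add of_real_mult of_real_power of_real_minus of_real_1)
      have key: "(c * n) ^ r * (1 + (-1) ^ r) = c ^ r * complex_of_real (cr r (b+1))"
        unfolding k1 power_mult_distrib by (simp add: distrib_left distrib_right mult_ac)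
      have "tdK K r (Suc b) 0 = K (Suc b) * ((c * n) ^ r * (1 + (-1) ^ r))"
        unfolding tdK_def c_def[symmetric] n_def[symmetric] by simp
      also have "\<dots> = K (Suc b) * (c ^ r * complex_of_real (cr r (b+1)))" by (simp only: key)
      also have "\<dots> = c ^ r / P * (complex_of_real (cr r (b+1)) * HH T q b)"
        by (simp add: K_def divide_inverse mult_ac)
      finally show "tdK K r (Suc b) 0 = (complex_of_real (2 * pi) * \<i>) ^ r / P * (complex_of_real (cr r (b+1)) * HH T q b)"
        unfolding cc .
    qed
    have A: "(\<lambda>b. tdK K r (Suc b) 0) sums ((complex_of_real (2 * pi) * \<i>) ^ r / P * G)"
      unfolding eqn by (rule sums_mult[OF g2])
    have B: "tdK K r 0 0 = 0" using r by (simp add: tdK_def)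
    have "(\<lambda>j. tdK K r j 0) sums ((complex_of_real (2 * pi) * \<i>) ^ r / P * G)"
      using sums_Suc_iff[THEN iffD1, OF A] unfolding B by simp
    hence "FK K r 0 = (complex_of_real (2 * pi) * \<i>) ^ r / P * G"
      by (simp add: FK_def sums_iff)
    also have "\<dots> = (complex_of_real (2 * pi) * \<i>) ^ r * M_T T r q"
      unfolding M_value[OF T q r] G_def P_def by (simp add: divide_inverse mult_ac)
    finally show ?thesis using \<open>(deriv ^^ r) f 0 = FK K r 0\<close> by simp
  qed
  show ?thesis using eps holo eq der by blast
qed


end
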